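(* Let $f\colon\mathbb{R}\to[0,\infty)$ be measurable and such that $\|f\|_{U^1(\mathbb{R})}$ and $\|f\|_{U^3(\mathbb{R})}$ are non-zero and finite. Then $$\|f\|_{U^2(\mathbb{R})}<\|f\|_{U^1(\mathbb{R})}^{1/2}\|f\|_{U^3(\mathbb{R})}^{1/2}.$$
   Context: With Lebesgue measure on $\mathbb{R}$, for $d\ge1$, $\|f\|_{U^d(\mathbb{R})}:=\left(\int_{\mathbb{R}^{d+1}}\Delta_{h_1}\cdots\Delta_{h_d}f(x)\,dx\,dh_1\cdots dh_d\right)^{1/2^d}$, where $\Delta_hf(x):=f(x+h)f(x)$. *)

theory Defs
  imports "HOL-Analysis.Analysis"
begin

fun gowers_diff :: "(real \<Rightarrow> real) \<Rightarrow> real list \<Rightarrow> real \<Rightarrow> real" where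
  "gowers_diff f [] x = f x"
| "gowers_diff f (h # hs) x = gowers_diff f hs (x + h) * gowers_diff f hs x"

fun iter_int :: "nat \<Rightarrow> (real list \<Rightarrow> ennreal) \<Rightarrow> ennreal" where
  "iter_int 0 F = F []"
| "iter_int (Suc d) F = (\<integral>\<^sup>+ h. iter_int d (\<lambda>hs. F (h # hs)) \<partial>lebesgue)"

text \<open>The integral defining the 2^d-th power of the U^d norm (for nonnegative f).\<close>
definition gowers_int :: "(real \<Rightarrow> real) \<Rightarrow> nat \<Rightarrow> ennreal" where
  "gowers_int f d = (\<integral>\<^sup>+ x. iter_int d (\<lambda>hs. ennreal (gowers_diff f hs x)) \<partial>lebesgue)"

text \<open>The U^d norm (meaningful when gowers_int f d is finite).\<close>
definition gowers_norm :: "(real \<Rightarrow> real) \<Rightarrow> nat \<Rightarrow> real" where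
  "gowers_norm f d = enn2real (gowers_int f d) powr (1 / 2 ^ d)"

end

theory Submission
  imports Defs
begin

lemma pw:
  fixes w u v :: ennreal and r s :: real
  assumes "r \<ge> 0" "s \<ge> 0"
  shows "ennreal (2 * r * s) * (w*u * v) \<le> ennreal (r^2) * (w*u^2) + ennreal (s^2) * (w * v^2)"
proof (cases w; cases u; cases v)
  fix a b c :: real assume h: "w = ennreal a" "0 \<le> a" "u = ennreal b" "0 \<le> b" "v = ennreal c" "0 \<le> c"
  have "2 * r * s * (a * b * c) \<le> r^2*(a*b^2) + s^2*(a*c^2)"
  proof -
    have "0 \<le> a * (r*b - s*c)^2" using h by simp
    then show ?thesis by (simp add: power2_eq_square algebra_simps)
  qed
  then have X: "ennreal (2 * r * s * (a * b * c)) \<le> ennreal (r^2*(a*b^2) + s^2*(a*c^2))"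
    by (rule ennreal_leI)
  show ?thesis using X h assms
    by (simp add: ennreal_mult ennreal_power ennreal_plus mult_nonneg_nonneg)
qed (auto simp: ennreal_top_mult ennreal_mult_top power2_eq_square mult.assoc[symmetric])

lemma nn_CS:
  fixes w u v :: "'a \<Rightarrow> ennreal"
  assumes [measurable]: "w \<in> borel_measurable M" "u \<in> borel_measurable M" "v \<in> borel_measurable M"
  shows "(\<integral>\<^sup>+x. w x * u x * v x \<partial>M)^2 \<le> (\<integral>\<^sup>+x. w x * u x ^ 2 \<partial>M) * (\<integral>\<^sup>+x. w x * v x ^ 2 \<partial>M)"
proof -
  define A where "A = (\<integral>\<^sup>+x. w x * u x ^ 2 \<partial>M)"
  define B where "B = (\<integral>\<^sup>+x. w x * v x ^ 2 \<partial>M)"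
  define X where "X = (\<integral>\<^sup>+x. w x * u x * v x \<partial>M)"
  have "X^2 \<le> A * B"
  proof (cases "A = 0 \<or> B = 0")
    case True
    then have "(AE x in M. w x * u x ^ 2 = 0) \<or> (AE x in M. w x * v x ^ 2 = 0)"
      unfolding A_def B_def by (auto simp: nn_integral_0_iff_AE)
    then have "AE x in M. w x * u x * v x = 0"
      by (auto elim!: AE_mp)
    then have "X = 0" unfolding X_def by (simp add: nn_integral_0_iff_AE)
    then show ?thesis by simp
  next
    case False
    note nz = False
    show ?thesis
    proof (cases "A = top \<or> B = top")
      case True
      then have "A * B = top" using nz by (auto simp: ennreal_mult_top ennreal_top_mult)
      then show ?thesis by simp
    next
      case False
      obtain a where a: "A = ennreal a" "a > 0" using nz False
        by (cases A) (auto simp: ennreal_zero_less_top)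
      obtain b where b: "B = ennreal b" "b > 0" using nz False
        by (cases B) auto
      define r where "r = sqrt b"
      define s where "s = sqrt a"
      have rs: "r \<ge> 0" "s \<ge> 0" "r > 0" "s > 0" using a b by (auto simp: r_def s_def)
      have "(\<integral>\<^sup>+x. ennreal (2 * r * s) * (w x * u x * v x) \<partial>M)
          \<le> (\<integral>\<^sup>+x. ennreal (r^2) * (w x * u x^2) + ennreal (s^2) * (w x * v x^2) \<partial>M)"
        by (intro nn_integral_mono pw rs)
      also have "\<dots> = ennreal (r^2) * A + ennreal (s^2) * B"
        unfolding A_def B_def by (simp add: nn_integral_add nn_integral_cmult)
      also have "\<dots> = ennreal (2 * a * b)"
        using a b rs by (simp add: r_def s_def ennreal_mult[symmetric] ennreal_plus[symmetric] del: ennreal_plus)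
      finally have le: "ennreal (2 * r * s) * X \<le> ennreal (2 * a * b)"
        unfolding X_def by (simp add: nn_integral_cmult)
      have "X \<noteq> top"
      proof
        assume "X = top"
        then show False using le rs by (simp add: ennreal_mult_top top_unique)
      qed
      then obtain x where x: "X = ennreal x" "x \<ge> 0" by (cases X) auto
      have "2 * r * s * x \<le> 2 * a * b"
        using le x rs a b by (simp add: ennreal_mult[symmetric] ennreal_le_iff2 del: ennreal_le_iff)
           (smt (verit) mult_pos_pos)
      define q where "q = sqrt a * sqrt b"
      have q: "q > 0" "r * s = q" "a * b = q * q" using a b
        by (auto simp: q_def r_def s_def algebra_simps)
      have "q * x \<le> q * q" using `2 * r * s * x \<le> 2 * a * b` q by (metis mult.assoc mult_le_cancel_left_pos zero_less_numeral)
      then have "x \<le> q" using q(1) by simp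
      then have "x^2 \<le> a * b"
        using x q by (simp add: power2_eq_square mult_mono)
      then have "ennreal (x^2) \<le> ennreal (a * b)" by (rule ennreal_leI)
      then show ?thesis using x a b
        by (simp add: ennreal_power ennreal_mult)
    qed
  qed
  then show ?thesis unfolding A_def B_def X_def .
qed

lemma nn_CS_eq:
  fixes u v :: "'a \<Rightarrow> ennreal"
  assumes [measurable]: "u \<in> borel_measurable M" "v \<in> borel_measurable M"
    and A: "(\<integral>\<^sup>+x. u x ^ 2 \<partial>M) = ennreal a" "a > 0"
    and B: "(\<integral>\<^sup>+x. v x ^ 2 \<partial>M) = ennreal b" "b > 0"
    and eq: "(\<integral>\<^sup>+x. u x * v x \<partial>M)^2 = (\<integral>\<^sup>+x. u x ^ 2 \<partial>M) * (\<integral>\<^sup>+x. v x ^ 2 \<partial>M)"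
  shows "AE x in M. u x = ennreal (sqrt a / sqrt b) * v x"
proof -
  define X where "X = (\<integral>\<^sup>+x. u x * v x \<partial>M)"
  have X2: "X^2 = ennreal (a * b)" using eq A B by (simp add: X_def ennreal_mult)
  then have "X \<noteq> top" by (auto simp: power_eq_top_ennreal_iff)
  then obtain x where x: "X = ennreal x" "x \<ge> 0" by (cases X) auto
  have "ennreal (x^2) = ennreal (a * b)" using X2 x by (simp add: ennreal_power)
  then have "x^2 = a * b" using A B by (simp add: ennreal_inj)
  then have xv: "x = sqrt a * sqrt b" using x A B
    by (metis real_sqrt_mult real_sqrt_unique)
  define r where "r = sqrt b"
  define s where "s = sqrt a"
  have rs: "r > 0" "s > 0" using A B by (auto simp: r_def s_def)
  define p where "p y = ennreal (r^2) * (1 * u y ^ 2) + ennreal (s^2) * (1 * v y ^ 2)" for y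
  define q where "q y = ennreal (2 * r * s) * (1 * u y * v y)" for y
  have [measurable]: "p \<in> borel_measurable M" "q \<in> borel_measurable M"
    unfolding p_def[abs_def] q_def[abs_def] by measurable
  have qp: "q y \<le> p y" for y unfolding p_def q_def using rs by (intro pw) auto
  have Ip: "integral\<^sup>N M p = ennreal (2 * a * b)"
    unfolding p_def using A B rs
    by (simp add: nn_integral_add nn_integral_cmult r_def s_def ennreal_mult[symmetric]
        ennreal_plus[symmetric] del: ennreal_plus)
  have hsq: "sqrt b * (sqrt a * (sqrt a * sqrt b)) = a * b"
  proof -
    have "sqrt b * (sqrt a * (sqrt a * sqrt b)) = (sqrt a * sqrt a) * (sqrt b * sqrt b)"
      by (simp add: ac_simps)
    also have "\<dots> = a * b" using A B by simp
    finally show ?thesis .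
  qed
  have Iq: "integral\<^sup>N M q = ennreal (2 * a * b)"
    unfolding q_def using A B rs x xv hsq
    by (simp add: nn_integral_cmult X_def[symmetric] r_def s_def ennreal_mult[symmetric])
  have "(\<integral>\<^sup>+y. p y - q y \<partial>M) = integral\<^sup>N M p - integral\<^sup>N M q"
    by (rule nn_integral_diff) (auto simp: Iq qp)
  also have "\<dots> = 0" using Ip Iq by simp
  finally have "AE y in M. p y - q y = 0"
    by (subst (asm) nn_integral_0_iff_AE) auto
  moreover have "AE y in M. p y \<noteq> top"
    using nn_integral_PInf_AE[of p M] Ip by simp
  ultimately show ?thesis
  proof eventually_elim
    case (elim y)
    then have le: "p y \<le> q y" by (simp add: diff_eq_0_iff_ennreal)
    have ut: "u y \<noteq> top" using elim(2) rs unfolding p_def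
      by (auto simp: power_eq_top_ennreal_iff ennreal_mult_eq_top_iff)
    have vt: "v y \<noteq> top" using elim(2) rs unfolding p_def
      by (auto simp: power_eq_top_ennreal_iff ennreal_mult_eq_top_iff)
    obtain U where U: "u y = ennreal U" "U \<ge> 0" using ut by (cases "u y") auto
    obtain V where V: "v y = ennreal V" "V \<ge> 0" using vt by (cases "v y") auto
    have "ennreal (r^2 * U^2 + s^2 * V^2) \<le> ennreal (2 * r * s * (U * V))"
      using le U V rs unfolding p_def q_def
      by (simp add: ennreal_mult ennreal_power ennreal_plus)
    then have "r^2 * U^2 + s^2 * V^2 \<le> 2 * r * s * (U * V)"
      using rs U V by (subst (asm) ennreal_le_iff) auto
    then have "(r * U - s * V)^2 \<le> 0" by (simp add: power2_eq_square algebra_simps)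
    then have "r * U = s * V" by simp
    then have "U = (s / r) * V" using rs by (simp add: field_simps)
    then show ?case using U V rs by (simp add: r_def s_def ennreal_mult[symmetric])
  qed
qed

definition MM :: "(real \<Rightarrow> ennreal) \<Rightarrow> ennreal" where
  "MM u = (\<integral>\<^sup>+y. u y \<partial>lborel)"
definition phi :: "(real \<Rightarrow> ennreal) \<Rightarrow> real \<Rightarrow> ennreal" where
  "phi u a = (\<integral>\<^sup>+y. u (y + a) * u y \<partial>lborel)"
definition D2 :: "(real \<Rightarrow> ennreal) \<Rightarrow> real \<Rightarrow> real \<Rightarrow> real \<Rightarrow> ennreal" where
  "D2 u a b y = u (y + a + b) * u (y + a) * (u (y + b) * u y)"
definition FF :: "(real \<Rightarrow> ennreal) \<Rightarrow> real \<Rightarrow> real \<Rightarrow> ennreal" where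
  "FF u a b = (\<integral>\<^sup>+y. D2 u a b y \<partial>lborel)"
definition Df :: "(real \<Rightarrow> ennreal) \<Rightarrow> real \<Rightarrow> ennreal" where
  "Df u x = (\<integral>\<^sup>+a. u (x + a) * phi u a \<partial>lborel)"
definition TT :: "(real \<Rightarrow> ennreal) \<Rightarrow> real \<Rightarrow> real \<Rightarrow> ennreal" where
  "TT u a t = (\<integral>\<^sup>+x. u x * u (x + a) * u (x + t) \<partial>lborel)"

context
  fixes u :: "real \<Rightarrow> ennreal"
  assumes u[measurable]: "u \<in> borel_measurable borel"
begin

lemma phi_meas[measurable]: "phi u \<in> borel_measurable borel"
  unfolding phi_def[abs_def] by measurable

lemma D2_meas[measurable (raw)]:
  assumes [measurable]: "f \<in> measurable M borel" "g \<in> measurable M borel" "h \<in> measurable M borel"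
  shows "(\<lambda>x. D2 u (f x) (g x) (h x)) \<in> borel_measurable M"
  unfolding D2_def by measurable

lemma FF_meas2: "(\<lambda>p. FF u (fst p) (snd p)) \<in> borel_measurable (borel \<Otimes>\<^sub>M borel)"
  unfolding FF_def[abs_def] by measurable

lemma FF_meas[measurable (raw)]:
  "f \<in> measurable M borel \<Longrightarrow> g \<in> measurable M borel \<Longrightarrow> (\<lambda>x. FF u (f x) (g x)) \<in> borel_measurable M"
  using measurable_compose[OF measurable_Pair FF_meas2, of f M g] by simp

lemma Df_meas[measurable]: "Df u \<in> borel_measurable borel"
  unfolding Df_def[abs_def] by measurable

lemma TT_meas2: "(\<lambda>p. TT u (fst p) (snd p)) \<in> borel_measurable (borel \<Otimes>\<^sub>M borel)"
  unfolding TT_def[abs_def] by measurable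

lemma TT_meas[measurable (raw)]:
  "f \<in> measurable M borel \<Longrightarrow> g \<in> measurable M borel \<Longrightarrow> (\<lambda>x. TT u (f x) (g x)) \<in> borel_measurable M"
  using measurable_compose[OF measurable_Pair TT_meas2, of f M g] by simp

lemma tr: "(\<integral>\<^sup>+x. h (t + x) \<partial>lborel) = (\<integral>\<^sup>+x. h x \<partial>lborel)" if [measurable]: "h \<in> borel_measurable borel" for h :: "real \<Rightarrow> ennreal"
  using nn_integral_real_affine[of h 1 t] by simp

lemma tr': "(\<integral>\<^sup>+x. h (x + t) \<partial>lborel) = (\<integral>\<^sup>+x. h x \<partial>lborel)" if [measurable]: "h \<in> borel_measurable borel" for h :: "real \<Rightarrow> ennreal"
  using tr[of h t] by (simp add: add.commute)

lemma int_phi: "(\<integral>\<^sup>+a. phi u a \<partial>lborel) = MM u * MM u"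
proof -
  have "(\<integral>\<^sup>+a. phi u a \<partial>lborel) = (\<integral>\<^sup>+a. \<integral>\<^sup>+y. u (y + a) * u y \<partial>lborel \<partial>lborel)"
    by (simp add: phi_def)
  also have "\<dots> = (\<integral>\<^sup>+y. \<integral>\<^sup>+a. u (y + a) * u y \<partial>lborel \<partial>lborel)"
    by (rule lborel_pair.Fubini') measurable
  also have "\<dots> = (\<integral>\<^sup>+y. MM u * u y \<partial>lborel)"
    by (simp add: nn_integral_multc tr MM_def)
  also have "\<dots> = MM u * MM u" by (simp add: nn_integral_cmult MM_def)
  finally show ?thesis .
qed

lemma G1_form: "(\<integral>\<^sup>+x. \<integral>\<^sup>+a. u (x + a) * u x \<partial>lborel \<partial>lborel) = MM u * MM u"
proof -
  have "(\<integral>\<^sup>+x. \<integral>\<^sup>+a. u (x + a) * u x \<partial>lborel \<partial>lborel) = (\<integral>\<^sup>+x. MM u * u x \<partial>lborel)"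
    by (simp add: nn_integral_multc tr MM_def)
  also have "\<dots> = MM u * MM u" by (simp add: nn_integral_cmult MM_def)
  finally show ?thesis .
qed

lemma G2_form1: "(\<integral>\<^sup>+x. \<integral>\<^sup>+a. \<integral>\<^sup>+b. u (x + a + b) * u (x + a) * (u (x + b) * u x) \<partial>lborel \<partial>lborel \<partial>lborel)
   = (\<integral>\<^sup>+x. \<integral>\<^sup>+a. u (x + a) * u x * phi u a \<partial>lborel \<partial>lborel)"
proof -
  have "(\<integral>\<^sup>+b. u (x + a + b) * u (x + a) * (u (x + b) * u x) \<partial>lborel) = u (x + a) * u x * phi u a" for x a
  proof -
    have "(\<integral>\<^sup>+b. u (x + a + b) * u (x + a) * (u (x + b) * u x) \<partial>lborel)
        = (\<integral>\<^sup>+b. (u (x + a) * u x) * (\<lambda>y. u (y + a) * u y) (x + b) \<partial>lborel)"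
      by (intro nn_integral_cong) (simp add: ac_simps)
    also have "\<dots> = (u (x + a) * u x) * (\<integral>\<^sup>+b. (\<lambda>y. u (y + a) * u y) (x + b) \<partial>lborel)"
      by (rule nn_integral_cmult) measurable
    also have "\<dots> = u (x + a) * u x * phi u a"
      by (subst tr) (simp_all add: phi_def)
    finally show ?thesis .
  qed
  then show ?thesis by simp
qed

lemma G2_form2: "(\<integral>\<^sup>+x. \<integral>\<^sup>+a. u (x + a) * u x * phi u a \<partial>lborel \<partial>lborel) = (\<integral>\<^sup>+a. phi u a * phi u a \<partial>lborel)"
proof -
  have "(\<integral>\<^sup>+x. \<integral>\<^sup>+a. u (x + a) * u x * phi u a \<partial>lborel \<partial>lborel) = (\<integral>\<^sup>+a. \<integral>\<^sup>+x. u (x + a) * u x * phi u a \<partial>lborel \<partial>lborel)"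
    by (rule lborel_pair.Fubini'[symmetric]) measurable
  also have "\<dots> = (\<integral>\<^sup>+a. phi u a * phi u a \<partial>lborel)"
    by (simp add: nn_integral_multc phi_def)
  finally show ?thesis .
qed

lemma G2_form3: "(\<integral>\<^sup>+x. \<integral>\<^sup>+a. u (x + a) * u x * phi u a \<partial>lborel \<partial>lborel) = (\<integral>\<^sup>+x. u x * Df u x \<partial>lborel)"
proof -
  have "(\<integral>\<^sup>+a. u (x + a) * u x * phi u a \<partial>lborel) = u x * Df u x" for x
    unfolding Df_def by (subst nn_integral_cmult[symmetric]) (auto intro!: nn_integral_cong simp: ac_simps)
  then show ?thesis by simp
qed

lemma G3_form1: "(\<integral>\<^sup>+x. \<integral>\<^sup>+a. \<integral>\<^sup>+b. \<integral>\<^sup>+c. u (x + a + b + c) * u (x + a + b) * (u (x + a + c) * u (x + a)) *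
          (u (x + b + c) * u (x + b) * (u (x + c) * u x)) \<partial>lborel \<partial>lborel \<partial>lborel \<partial>lborel)
   = (\<integral>\<^sup>+x. \<integral>\<^sup>+a. \<integral>\<^sup>+b. D2 u a b x * FF u a b \<partial>lborel \<partial>lborel \<partial>lborel)"
proof -
  have "(\<integral>\<^sup>+c. u (x + a + b + c) * u (x + a + b) * (u (x + a + c) * u (x + a)) *
          (u (x + b + c) * u (x + b) * (u (x + c) * u x)) \<partial>lborel) = D2 u a b x * FF u a b" for x a b
  proof -
    have "(\<integral>\<^sup>+c. u (x + a + b + c) * u (x + a + b) * (u (x + a + c) * u (x + a)) *
          (u (x + b + c) * u (x + b) * (u (x + c) * u x)) \<partial>lborel)
        = (\<integral>\<^sup>+c. D2 u a b x * D2 u a b (x + c) \<partial>lborel)"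
      by (intro nn_integral_cong) (simp add: D2_def ac_simps)
    also have "\<dots> = D2 u a b x * (\<integral>\<^sup>+c. D2 u a b (x + c) \<partial>lborel)"
      by (rule nn_integral_cmult) measurable
    also have "\<dots> = D2 u a b x * FF u a b"
      by (subst tr) (simp_all add: FF_def)
    finally show ?thesis .
  qed
  then show ?thesis by simp
qed

lemma G3_form2: "(\<integral>\<^sup>+x. \<integral>\<^sup>+a. \<integral>\<^sup>+b. D2 u a b x * FF u a b \<partial>lborel \<partial>lborel \<partial>lborel)
   = (\<integral>\<^sup>+a. \<integral>\<^sup>+b. FF u a b * FF u a b \<partial>lborel \<partial>lborel)"
proof -
  have "(\<integral>\<^sup>+x. \<integral>\<^sup>+a. \<integral>\<^sup>+b. D2 u a b x * FF u a b \<partial>lborel \<partial>lborel \<partial>lborel)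
     = (\<integral>\<^sup>+a. \<integral>\<^sup>+x. \<integral>\<^sup>+b. D2 u a b x * FF u a b \<partial>lborel \<partial>lborel \<partial>lborel)"
    by (rule lborel_pair.Fubini'[symmetric]) measurable
  also have "\<dots> = (\<integral>\<^sup>+a. \<integral>\<^sup>+b. \<integral>\<^sup>+x. D2 u a b x * FF u a b \<partial>lborel \<partial>lborel \<partial>lborel)"
    by (intro nn_integral_cong lborel_pair.Fubini'[symmetric]) measurable
  also have "\<dots> = (\<integral>\<^sup>+a. \<integral>\<^sup>+b. FF u a b * FF u a b \<partial>lborel \<partial>lborel)"
    by (simp add: nn_integral_multc FF_def)
  finally show ?thesis .
qed

lemma step_b: "(\<integral>\<^sup>+x. u x * Df u x \<partial>lborel)^2 \<le> MM u * (\<integral>\<^sup>+x. u x * Df u x ^ 2 \<partial>lborel)"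
  using nn_CS[of u lborel "\<lambda>_. 1" "Df u"] by (simp add: MM_def)

lemma step_c: "(\<integral>\<^sup>+x. u x * Df u x ^ 2 \<partial>lborel) = (\<integral>\<^sup>+a. \<integral>\<^sup>+t. phi u a * phi u t * TT u a t \<partial>lborel \<partial>lborel)"
proof -
  define K where "K x a t = u x * (u (x + a) * phi u a * (u (x + t) * phi u t))" for x a t
  have [measurable]: "(\<lambda>p. K (fst p) (fst (snd p)) (snd (snd p))) \<in> borel_measurable (borel \<Otimes>\<^sub>M borel \<Otimes>\<^sub>M borel)"
    unfolding K_def by measurable
  have "u x * Df u x ^ 2 = (\<integral>\<^sup>+a. \<integral>\<^sup>+t. K x a t \<partial>lborel \<partial>lborel)" for x
  proof -
    have "Df u x ^ 2 = (\<integral>\<^sup>+a. u (x + a) * phi u a \<partial>lborel) * (\<integral>\<^sup>+t. u (x + t) * phi u t \<partial>lborel)"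
      by (simp add: Df_def power2_eq_square)
    also have "\<dots> = (\<integral>\<^sup>+a. u (x + a) * phi u a * (\<integral>\<^sup>+t. u (x + t) * phi u t \<partial>lborel) \<partial>lborel)"
      by (rule nn_integral_multc[symmetric]) measurable
    also have "\<dots> = (\<integral>\<^sup>+a. \<integral>\<^sup>+t. u (x + a) * phi u a * (u (x + t) * phi u t) \<partial>lborel \<partial>lborel)"
      by (intro nn_integral_cong nn_integral_cmult[symmetric]) measurable
    finally have "u x * Df u x ^ 2 = u x * (\<integral>\<^sup>+a. \<integral>\<^sup>+t. u (x + a) * phi u a * (u (x + t) * phi u t) \<partial>lborel \<partial>lborel)"
      by simp
    also have "\<dots> = (\<integral>\<^sup>+a. u x * (\<integral>\<^sup>+t. u (x + a) * phi u a * (u (x + t) * phi u t) \<partial>lborel) \<partial>lborel)"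
      by (rule nn_integral_cmult[symmetric]) measurable
    also have "\<dots> = (\<integral>\<^sup>+a. \<integral>\<^sup>+t. K x a t \<partial>lborel \<partial>lborel)"
      unfolding K_def by (intro nn_integral_cong nn_integral_cmult[symmetric]) measurable
    finally show ?thesis .
  qed
  then have "(\<integral>\<^sup>+x. u x * Df u x ^ 2 \<partial>lborel) = (\<integral>\<^sup>+x. \<integral>\<^sup>+a. \<integral>\<^sup>+t. K x a t \<partial>lborel \<partial>lborel \<partial>lborel)"
    by simp
  also have "\<dots> = (\<integral>\<^sup>+a. \<integral>\<^sup>+x. \<integral>\<^sup>+t. K x a t \<partial>lborel \<partial>lborel \<partial>lborel)"
    by (rule lborel_pair.Fubini'[symmetric]) (unfold K_def, measurable)
  also have "\<dots> = (\<integral>\<^sup>+a. \<integral>\<^sup>+t. \<integral>\<^sup>+x. K x a t \<partial>lborel \<partial>lborel \<partial>lborel)"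
    by (intro nn_integral_cong lborel_pair.Fubini'[symmetric]) (unfold K_def, measurable)
  also have "\<dots> = (\<integral>\<^sup>+a. \<integral>\<^sup>+t. phi u a * phi u t * TT u a t \<partial>lborel \<partial>lborel)"
  proof (intro nn_integral_cong)
    fix a t
    have "(\<integral>\<^sup>+x. K x a t \<partial>lborel) = (\<integral>\<^sup>+x. (phi u a * phi u t) * (u x * u (x + a) * u (x + t)) \<partial>lborel)"
      unfolding K_def by (intro nn_integral_cong) (simp add: ac_simps)
    also have "\<dots> = phi u a * phi u t * TT u a t"
      unfolding TT_def by (rule nn_integral_cmult) measurable
    finally show "(\<integral>\<^sup>+x. K x a t \<partial>lborel) = phi u a * phi u t * TT u a t" .
  qed
  finally show ?thesis .
qed

lemma step_d: "(\<integral>\<^sup>+a. \<integral>\<^sup>+t. phi u a * phi u t * TT u a t \<partial>lborel \<partial>lborel)^2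
  \<le> (MM u * MM u * (\<integral>\<^sup>+a. phi u a * phi u a \<partial>lborel)) * (\<integral>\<^sup>+a. \<integral>\<^sup>+t. phi u a * TT u a t ^ 2 \<partial>lborel \<partial>lborel)"
proof -
  have cs: "(\<integral>\<^sup>+p. phi u (fst p) * phi u (snd p) * TT u (fst p) (snd p) \<partial>(lborel \<Otimes>\<^sub>M lborel))^2
    \<le> (\<integral>\<^sup>+p. phi u (fst p) * phi u (snd p) ^ 2 \<partial>(lborel \<Otimes>\<^sub>M lborel)) *
       (\<integral>\<^sup>+p. phi u (fst p) * TT u (fst p) (snd p) ^ 2 \<partial>(lborel \<Otimes>\<^sub>M lborel))"
    by (rule nn_CS) measurable
  have e1: "(\<integral>\<^sup>+p. phi u (fst p) * phi u (snd p) * TT u (fst p) (snd p) \<partial>(lborel \<Otimes>\<^sub>M lborel))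
     = (\<integral>\<^sup>+a. \<integral>\<^sup>+t. phi u a * phi u t * TT u a t \<partial>lborel \<partial>lborel)"
    by (subst lborel.nn_integral_fst[symmetric], measurable, (simp)?)
  have e2: "(\<integral>\<^sup>+p. phi u (fst p) * TT u (fst p) (snd p) ^ 2 \<partial>(lborel \<Otimes>\<^sub>M lborel))
     = (\<integral>\<^sup>+a. \<integral>\<^sup>+t. phi u a * TT u a t ^ 2 \<partial>lborel \<partial>lborel)"
    by (subst lborel.nn_integral_fst[symmetric], measurable, (simp)?)
  have "(\<integral>\<^sup>+p. phi u (fst p) * phi u (snd p) ^ 2 \<partial>(lborel \<Otimes>\<^sub>M lborel))
     = (\<integral>\<^sup>+a. \<integral>\<^sup>+t. phi u a * phi u t ^ 2 \<partial>lborel \<partial>lborel)"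
    by (subst lborel.nn_integral_fst[symmetric], measurable, (simp)?)
  also have "\<dots> = (\<integral>\<^sup>+a. phi u a * (\<integral>\<^sup>+t. phi u t ^ 2 \<partial>lborel) \<partial>lborel)"
    by (intro nn_integral_cong nn_integral_cmult) measurable
  also have "\<dots> = (\<integral>\<^sup>+a. phi u a \<partial>lborel) * (\<integral>\<^sup>+t. phi u t ^ 2 \<partial>lborel)"
    by (rule nn_integral_multc) measurable
  also have "\<dots> = MM u * MM u * (\<integral>\<^sup>+a. phi u a * phi u a \<partial>lborel)"
    by (simp add: int_phi power2_eq_square)
  finally have e3: "(\<integral>\<^sup>+p. phi u (fst p) * phi u (snd p) ^ 2 \<partial>(lborel \<Otimes>\<^sub>M lborel)) = MM u * MM u * (\<integral>\<^sup>+a. phi u a * phi u a \<partial>lborel)" .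
  show ?thesis using cs unfolding e1 e2 e3 .
qed

lemma step_e: "(\<integral>\<^sup>+t. TT u a t ^ 2 \<partial>lborel) = (\<integral>\<^sup>+b. FF u a b * phi u b \<partial>lborel)"
proof -
  define g where "g x = u x * u (x + a)" for x
  have [measurable]: "g \<in> borel_measurable borel" unfolding g_def by measurable
  have inner: "(\<integral>\<^sup>+t. u (x + t) * u (z + t) \<partial>lborel) = phi u (z - x)" for x z
  proof -
    have "(\<integral>\<^sup>+t. u (x + t) * u (z + t) \<partial>lborel) = (\<integral>\<^sup>+t. (\<lambda>y. u (y + (z - x)) * u y) (x + t) \<partial>lborel)"
      by (intro nn_integral_cong) (simp add: ac_simps)
    also have "\<dots> = phi u (z - x)" by (subst tr) (simp_all add: phi_def)
    finally show ?thesis .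
  qed
  have R: "(\<integral>\<^sup>+y. \<integral>\<^sup>+z. g y * g z * phi u (z - y) \<partial>lborel \<partial>lborel) = (\<integral>\<^sup>+b. FF u a b * phi u b \<partial>lborel)"
  proof -
    have "(\<integral>\<^sup>+b. FF u a b * phi u b \<partial>lborel) = (\<integral>\<^sup>+b. \<integral>\<^sup>+y. D2 u a b y * phi u b \<partial>lborel \<partial>lborel)"
      unfolding FF_def by (intro nn_integral_cong nn_integral_multc[symmetric]) measurable
    also have "\<dots> = (\<integral>\<^sup>+y. \<integral>\<^sup>+b. D2 u a b y * phi u b \<partial>lborel \<partial>lborel)"
      by (rule lborel_pair.Fubini') measurable
    also have "\<dots> = (\<integral>\<^sup>+y. \<integral>\<^sup>+z. g y * g z * phi u (z - y) \<partial>lborel \<partial>lborel)"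
    proof (rule nn_integral_cong)
      fix y
      have "(\<integral>\<^sup>+b. D2 u a b y * phi u b \<partial>lborel) = (\<integral>\<^sup>+b. g y * (\<lambda>z. g z * phi u (z - y)) (y + b) \<partial>lborel)"
        by (intro nn_integral_cong) (simp add: D2_def g_def ac_simps)
      also have "\<dots> = g y * (\<integral>\<^sup>+b. (\<lambda>z. g z * phi u (z - y)) (y + b) \<partial>lborel)"
        by (rule nn_integral_cmult) measurable
      also have "\<dots> = g y * (\<integral>\<^sup>+z. g z * phi u (z - y) \<partial>lborel)"
        by (subst tr) simp_all
      also have "\<dots> = (\<integral>\<^sup>+z. g y * g z * phi u (z - y) \<partial>lborel)"
        by (subst nn_integral_cmult[symmetric]) (simp_all add: ac_simps)
      finally show "(\<integral>\<^sup>+b. D2 u a b y * phi u b \<partial>lborel) = (\<integral>\<^sup>+z. g y * g z * phi u (z - y) \<partial>lborel)" .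
    qed
    finally show ?thesis ..
  qed
  have "(\<integral>\<^sup>+t. TT u a t ^ 2 \<partial>lborel) = (\<integral>\<^sup>+t. \<integral>\<^sup>+x. \<integral>\<^sup>+z. g x * g z * (u (x + t) * u (z + t)) \<partial>lborel \<partial>lborel \<partial>lborel)"
  proof (intro nn_integral_cong)
    fix t
    have "TT u a t ^ 2 = (\<integral>\<^sup>+x. g x * u (x + t) \<partial>lborel) * (\<integral>\<^sup>+z. g z * u (z + t) \<partial>lborel)"
      by (simp add: TT_def g_def power2_eq_square)
    also have "\<dots> = (\<integral>\<^sup>+x. g x * u (x + t) * (\<integral>\<^sup>+z. g z * u (z + t) \<partial>lborel) \<partial>lborel)"
      by (rule nn_integral_multc[symmetric]) measurable
    also have "\<dots> = (\<integral>\<^sup>+x. \<integral>\<^sup>+z. g x * g z * (u (x + t) * u (z + t)) \<partial>lborel \<partial>lborel)"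
      by (intro nn_integral_cong, subst nn_integral_cmult[symmetric]) (simp_all add: ac_simps)
    finally show "TT u a t ^ 2 = (\<integral>\<^sup>+x. \<integral>\<^sup>+z. g x * g z * (u (x + t) * u (z + t)) \<partial>lborel \<partial>lborel)" .
  qed
  also have "\<dots> = (\<integral>\<^sup>+x. \<integral>\<^sup>+t. \<integral>\<^sup>+z. g x * g z * (u (x + t) * u (z + t)) \<partial>lborel \<partial>lborel \<partial>lborel)"
    by (rule lborel_pair.Fubini') measurable
  also have "\<dots> = (\<integral>\<^sup>+x. \<integral>\<^sup>+z. \<integral>\<^sup>+t. g x * g z * (u (x + t) * u (z + t)) \<partial>lborel \<partial>lborel \<partial>lborel)"
    by (intro nn_integral_cong lborel_pair.Fubini') measurable
  also have "\<dots> = (\<integral>\<^sup>+x. \<integral>\<^sup>+z. g x * g z * phi u (z - x) \<partial>lborel \<partial>lborel)"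
    by (intro nn_integral_cong, subst nn_integral_cmult) (simp_all add: inner)
  finally show ?thesis using R by simp
qed

lemma L_eq: "(\<integral>\<^sup>+a. \<integral>\<^sup>+t. phi u a * TT u a t ^ 2 \<partial>lborel \<partial>lborel) = (\<integral>\<^sup>+a. \<integral>\<^sup>+b. FF u a b * (phi u a * phi u b) \<partial>lborel \<partial>lborel)"
proof (rule nn_integral_cong)
  fix a
  have "(\<integral>\<^sup>+t. phi u a * TT u a t ^ 2 \<partial>lborel) = phi u a * (\<integral>\<^sup>+t. TT u a t ^ 2 \<partial>lborel)"
    by (rule nn_integral_cmult) measurable
  also have "\<dots> = phi u a * (\<integral>\<^sup>+b. FF u a b * phi u b \<partial>lborel)" by (simp add: step_e)
  also have "\<dots> = (\<integral>\<^sup>+b. FF u a b * (phi u a * phi u b) \<partial>lborel)"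
    by (subst nn_integral_cmult[symmetric]) (simp_all add: ac_simps)
  finally show "(\<integral>\<^sup>+t. phi u a * TT u a t ^ 2 \<partial>lborel) = (\<integral>\<^sup>+b. FF u a b * (phi u a * phi u b) \<partial>lborel)" .
qed

lemma step_f: "(\<integral>\<^sup>+a. \<integral>\<^sup>+b. FF u a b * (phi u a * phi u b) \<partial>lborel \<partial>lborel)^2
  \<le> (\<integral>\<^sup>+a. \<integral>\<^sup>+b. FF u a b * FF u a b \<partial>lborel \<partial>lborel) * ((\<integral>\<^sup>+a. phi u a * phi u a \<partial>lborel) * (\<integral>\<^sup>+a. phi u a * phi u a \<partial>lborel))"
proof -
  have cs: "(\<integral>\<^sup>+p. 1 * FF u (fst p) (snd p) * (phi u (fst p) * phi u (snd p)) \<partial>(lborel \<Otimes>\<^sub>M lborel))^2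
    \<le> (\<integral>\<^sup>+p. 1 * FF u (fst p) (snd p) ^ 2 \<partial>(lborel \<Otimes>\<^sub>M lborel)) *
       (\<integral>\<^sup>+p. 1 * (phi u (fst p) * phi u (snd p)) ^ 2 \<partial>(lborel \<Otimes>\<^sub>M lborel))"
    by (rule nn_CS) measurable
  have e1: "(\<integral>\<^sup>+p. 1 * FF u (fst p) (snd p) * (phi u (fst p) * phi u (snd p)) \<partial>(lborel \<Otimes>\<^sub>M lborel))
     = (\<integral>\<^sup>+a. \<integral>\<^sup>+b. FF u a b * (phi u a * phi u b) \<partial>lborel \<partial>lborel)"
    by (subst lborel.nn_integral_fst[symmetric], measurable, (simp)?)
  have e2: "(\<integral>\<^sup>+p. 1 * FF u (fst p) (snd p) ^ 2 \<partial>(lborel \<Otimes>\<^sub>M lborel))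
     = (\<integral>\<^sup>+a. \<integral>\<^sup>+b. FF u a b * FF u a b \<partial>lborel \<partial>lborel)"
    by (subst lborel.nn_integral_fst[symmetric], measurable) (simp add: power2_eq_square)
  have "(\<integral>\<^sup>+p. 1 * (phi u (fst p) * phi u (snd p)) ^ 2 \<partial>(lborel \<Otimes>\<^sub>M lborel))
      = (\<integral>\<^sup>+a. \<integral>\<^sup>+b. (phi u a * phi u a) * (phi u b * phi u b) \<partial>lborel \<partial>lborel)"
    by (subst lborel.nn_integral_fst[symmetric], measurable) (simp add: power2_eq_square ac_simps)
  also have "\<dots> = (\<integral>\<^sup>+a. (phi u a * phi u a) * (\<integral>\<^sup>+b. phi u b * phi u b \<partial>lborel) \<partial>lborel)"
    by (intro nn_integral_cong nn_integral_cmult) measurable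
  also have "\<dots> = (\<integral>\<^sup>+a. phi u a * phi u a \<partial>lborel) * (\<integral>\<^sup>+a. phi u a * phi u a \<partial>lborel)"
    by (rule nn_integral_multc) measurable
  finally have e3: "(\<integral>\<^sup>+p. 1 * (phi u (fst p) * phi u (snd p)) ^ 2 \<partial>(lborel \<Otimes>\<^sub>M lborel)) =
     (\<integral>\<^sup>+a. phi u a * phi u a \<partial>lborel) * (\<integral>\<^sup>+a. phi u a * phi u a \<partial>lborel)" .
  show ?thesis using cs unfolding e1 e2 e3 .
qed

lemma chain:
  defines "G2 \<equiv> (\<integral>\<^sup>+a. phi u a * phi u a \<partial>lborel)"
    and "G3 \<equiv> (\<integral>\<^sup>+a. \<integral>\<^sup>+b. FF u a b * FF u a b \<partial>lborel \<partial>lborel)"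
    and "L \<equiv> (\<integral>\<^sup>+a. \<integral>\<^sup>+b. FF u a b * (phi u a * phi u b) \<partial>lborel \<partial>lborel)"
  shows "G2^8 \<le> MM u^8 * G2^2 * L^2" and "MM u^8 * G2^2 * L^2 \<le> MM u^8 * G2^4 * G3"
proof -
  define X where "X = (\<integral>\<^sup>+x. u x * Df u x ^ 2 \<partial>lborel)"
  have hG: "(\<integral>\<^sup>+x. u x * Df u x \<partial>lborel) = G2"
    using G2_form2 G2_form3 unfolding G2_def by simp
  have b: "G2^2 \<le> MM u * X" using step_b unfolding hG X_def .
  have cd: "X^2 \<le> (MM u * MM u * G2) * L"
    using step_d unfolding X_def step_c G2_def L_def L_eq .
  have f: "L^2 \<le> G3 * (G2 * G2)" using step_f unfolding G3_def G2_def L_def .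
  have "G2^8 = (G2^2)^4" by (simp add: power_mult[symmetric])
  also have "\<dots> \<le> (MM u * X)^4" by (intro power_mono b) simp
  also have "\<dots> = MM u^4 * (X^2)^2" by (simp add: power_mult_distrib power_mult[symmetric])
  also have "\<dots> \<le> MM u^4 * ((MM u * MM u * G2) * L)^2"
    by (intro mult_left_mono power_mono cd) simp_all
  also have "\<dots> = MM u^8 * G2^2 * L^2"
    by (simp add: eval_nat_numeral ac_simps)
  finally show "G2^8 \<le> MM u^8 * G2^2 * L^2" .
  have "MM u^8 * G2^2 * L^2 \<le> MM u^8 * G2^2 * (G3 * (G2 * G2))"
    by (intro mult_left_mono f) simp
  also have "\<dots> = MM u^8 * G2^4 * G3"
    by (simp add: eval_nat_numeral ac_simps)
  finally show "MM u^8 * G2^2 * L^2 \<le> MM u^8 * G2^4 * G3" .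
qed

lemma nonstrict:
  assumes fin: "(\<integral>\<^sup>+a. phi u a * phi u a \<partial>lborel) \<noteq> top"
  shows "(\<integral>\<^sup>+a. phi u a * phi u a \<partial>lborel)^4 \<le> (MM u * MM u)^4 * (\<integral>\<^sup>+a. \<integral>\<^sup>+b. FF u a b * FF u a b \<partial>lborel \<partial>lborel)"
proof -
  define G2 where "G2 = (\<integral>\<^sup>+a. phi u a * phi u a \<partial>lborel)"
  define G3 where "G3 = (\<integral>\<^sup>+a. \<integral>\<^sup>+b. FF u a b * FF u a b \<partial>lborel \<partial>lborel)"
  have c: "G2^8 \<le> MM u^8 * G2^4 * G3" using chain(1) chain(2) unfolding G2_def G3_def by (rule order_trans)
  show ?thesis
  proof (cases "G2 = 0")
    case True then show ?thesis by (simp add: G2_def)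
  next
    case False
    have "G2^4 * G2^4 \<le> G2^4 * ((MM u * MM u)^4 * G3)"
      using c by (simp add: eval_nat_numeral ac_simps)
    then have "G2^4 \<le> (MM u * MM u)^4 * G3"
      using False fin by (subst (asm) ennreal_mult_le_mult_iff) (auto simp: G2_def power_eq_top_ennreal)
    then show ?thesis by (simp add: G2_def G3_def)
  qed
qed

end

lemma trans_emeasure:
  assumes [measurable]: "B \<in> sets borel"
  shows "emeasure lborel {b. a + b \<in> B} = emeasure lborel (B :: real set)"
proof -
  have "emeasure lborel B = emeasure (distr lborel borel ((+) a)) B"
    by (simp add: lborel_distr_plus)
  also have "\<dots> = emeasure lborel ((+) a -` B \<inter> space lborel)"
    by (rule emeasure_distr) auto
  also have "(+) a -` B \<inter> space lborel = {b. a + b \<in> B}" by auto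
  finally show ?thesis by simp
qed

lemma half:
  fixes S :: "real set" and \<sigma> :: real
  assumes S[measurable]: "S \<in> sets borel" and fin: "emeasure lborel S < \<infinity>"
    and ae: "AE a in lborel. AE b in lborel. a \<in> S \<longrightarrow> b \<in> S \<longrightarrow> a + b \<in> S"
  shows "emeasure lborel (S \<inter> {x. \<sigma> * x > 0}) = 0"
proof -
  define P where "P = S \<inter> {x. \<sigma> * x > 0}"
  have P[measurable]: "P \<in> sets borel" unfolding P_def by measurable
  have finP: "emeasure lborel P \<noteq> \<infinity>"
    using fin emeasure_mono[of P S lborel] by (auto simp: P_def top_unique)
  have AEa: "AE a in lborel. a \<in> P \<longrightarrow> emeasure lborel (P \<inter> {x. \<sigma> * x \<le> \<sigma> * a}) = 0"
    using ae
  proof eventually_elim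
    case (elim a)
    show ?case
    proof
      assume aP: "a \<in> P"
      define Q where "Q = P \<inter> {x. \<sigma> * x > \<sigma> * a}"
      define R where "R = P \<inter> {x. \<sigma> * x \<le> \<sigma> * a}"
      have [measurable]: "Q \<in> sets borel" "R \<in> sets borel" unfolding Q_def R_def by measurable
      have "AE b in lborel. b \<in> P \<longrightarrow> b \<in> {b. a + b \<in> Q}"
        using elim
      proof eventually_elim
        case (elim b)
        show ?case
        proof
          assume bP: "b \<in> P"
          then have "a + b \<in> S" using elim aP by (auto simp: P_def)
          moreover have "\<sigma> * (a + b) > \<sigma> * a" "\<sigma> * (a + b) > 0"
            using aP bP by (auto simp: P_def algebra_simps)
          ultimately show "b \<in> {b. a + b \<in> Q}" by (auto simp: Q_def P_def)
        qed
      qed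
      then have "emeasure lborel P \<le> emeasure lborel {b. a + b \<in> Q}"
        by (rule emeasure_mono_AE) measurable
      also have "\<dots> = emeasure lborel Q" by (rule trans_emeasure) measurable
      finally have le: "emeasure lborel P \<le> emeasure lborel Q" .
      have "emeasure lborel Q + emeasure lborel R = emeasure lborel (Q \<union> R)"
        by (rule plus_emeasure) (auto simp: Q_def R_def)
      also have "Q \<union> R = P" by (auto simp: Q_def R_def)
      finally have "emeasure lborel Q + emeasure lborel R \<le> emeasure lborel Q + 0"
        using le by simp
      moreover have "emeasure lborel Q \<noteq> \<infinity>"
        using finP emeasure_mono[of Q P lborel] by (auto simp: Q_def top_unique)
      ultimately show "emeasure lborel (P \<inter> {x. \<sigma> * x \<le> \<sigma> * a}) = 0"
        unfolding R_def[symmetric] by (simp add: ennreal_add_left_cancel_le)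
    qed
  qed
  define K where "K a b = indicator P a * (indicator P b * (if \<sigma> * b \<le> \<sigma> * a then 1 else 0) :: ennreal)" for a b
  have Km[measurable]: "(\<lambda>p. K (fst p) (snd p)) \<in> borel_measurable (lborel \<Otimes>\<^sub>M lborel)"
    unfolding K_def by measurable
  have Z: "(\<integral>\<^sup>+a. \<integral>\<^sup>+b. K a b \<partial>lborel \<partial>lborel) = 0"
  proof -
    have "(\<integral>\<^sup>+b. K a b \<partial>lborel) = indicator P a * emeasure lborel (P \<inter> {x. \<sigma> * x \<le> \<sigma> * a})" for a
    proof -
      have "(\<integral>\<^sup>+b. K a b \<partial>lborel) = (\<integral>\<^sup>+b. indicator P a * indicator (P \<inter> {x. \<sigma> * x \<le> \<sigma> * a}) b \<partial>lborel)"
        unfolding K_def by (intro nn_integral_cong) (simp split: split_indicator)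
      also have "\<dots> = indicator P a * (\<integral>\<^sup>+b. indicator (P \<inter> {x. \<sigma> * x \<le> \<sigma> * a}) b \<partial>lborel)"
        by (rule nn_integral_cmult) measurable
      also have "\<dots> = indicator P a * emeasure lborel (P \<inter> {x. \<sigma> * x \<le> \<sigma> * a})"
        by (subst nn_integral_indicator) auto
      finally show ?thesis .
    qed
    then have "(\<integral>\<^sup>+a. \<integral>\<^sup>+b. K a b \<partial>lborel \<partial>lborel) = (\<integral>\<^sup>+a. indicator P a * emeasure lborel (P \<inter> {x. \<sigma> * x \<le> \<sigma> * a}) \<partial>lborel)"
      by simp
    also have "\<dots> = (\<integral>\<^sup>+a. 0 \<partial>lborel)"
    proof -
      have AEz: "AE a in lborel. indicator P a * emeasure lborel (P \<inter> {x. \<sigma> * x \<le> \<sigma> * a}) = (0::ennreal)"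
        using AEa by eventually_elim (simp split: split_indicator)
      show ?thesis using nn_integral_cong_AE[OF AEz] by simp
    qed
    finally show ?thesis by simp
  qed
  have Z': "(\<integral>\<^sup>+a. \<integral>\<^sup>+b. K b a \<partial>lborel \<partial>lborel) = 0"
  proof -
    have "(\<integral>\<^sup>+a. \<integral>\<^sup>+b. K b a \<partial>lborel \<partial>lborel) = (\<integral>\<^sup>+b. \<integral>\<^sup>+a. K b a \<partial>lborel \<partial>lborel)"
      by (rule lborel_pair.Fubini') (unfold K_def, measurable)
    then show ?thesis using Z by simp
  qed
  have "emeasure lborel P * emeasure lborel P = (\<integral>\<^sup>+a. \<integral>\<^sup>+b. indicator P a * indicator P b \<partial>lborel \<partial>lborel)"
    by (simp add: nn_integral_cmult nn_integral_multc)
  also have "\<dots> \<le> (\<integral>\<^sup>+a. \<integral>\<^sup>+b. K a b + K b a \<partial>lborel \<partial>lborel)"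
    by (intro nn_integral_mono) (auto simp: K_def split: split_indicator if_split)
  also have "\<dots> = (\<integral>\<^sup>+a. (\<integral>\<^sup>+b. K a b \<partial>lborel) + (\<integral>\<^sup>+b. K b a \<partial>lborel) \<partial>lborel)"
    by (intro nn_integral_cong nn_integral_add) (unfold K_def, measurable)+
  also have "\<dots> = (\<integral>\<^sup>+a. \<integral>\<^sup>+b. K a b \<partial>lborel \<partial>lborel) + (\<integral>\<^sup>+a. \<integral>\<^sup>+b. K b a \<partial>lborel \<partial>lborel)"
    by (rule nn_integral_add) (unfold K_def, measurable)+
  also have "\<dots> = 0" using Z Z' by simp
  finally show ?thesis unfolding P_def by simp
qed

lemma core:
  fixes S :: "real set"
  assumes S[measurable]: "S \<in> sets borel" and fin: "emeasure lborel S < \<infinity>"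
    and ae: "AE p in lborel \<Otimes>\<^sub>M lborel. fst p \<in> S \<longrightarrow> snd p \<in> S \<longrightarrow> fst p + snd p \<in> S"
  shows "emeasure lborel S = 0"
proof -
  have ae2: "AE a in lborel. AE b in lborel. a \<in> S \<longrightarrow> b \<in> S \<longrightarrow> a + b \<in> S"
    using lborel_pair.AE_pair[OF ae] by simp
  have h1: "emeasure lborel (S \<inter> {x. 0 < x}) = 0" using half[OF S fin ae2, of 1] by simp
  have h2: "emeasure lborel (S \<inter> {x. x < 0}) = 0" using half[OF S fin ae2, of "-1"] by simp
  have [measurable]: "S \<inter> {x. 0 < x} \<in> sets borel" "S \<inter> {x. x < 0} \<in> sets borel" by measurable
  have "S \<subseteq> (S \<inter> {x. 0 < x}) \<union> (S \<inter> {x. x < 0}) \<union> {0}" by auto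
  then have "emeasure lborel S \<le> emeasure lborel ((S \<inter> {x. 0 < x}) \<union> (S \<inter> {x. x < 0}) \<union> {0})"
    by (intro emeasure_mono) measurable
  also have "\<dots> = emeasure lborel ((S \<inter> {x. 0 < x}) \<union> (S \<inter> {x. x < 0}))"
    by (rule emeasure_Un_null_set) (simp_all add: null_sets_def)
  also have "\<dots> \<le> emeasure lborel (S \<inter> {x. 0 < x}) + emeasure lborel (S \<inter> {x. x < 0})"
    by (rule emeasure_subadditive) simp_all
  also have "\<dots> = 0" using h1 h2 by simp
  finally show ?thesis by simp
qed

lemma tr0: "(\<integral>\<^sup>+x. h (t + x) \<partial>lborel) = (\<integral>\<^sup>+x. h x \<partial>lborel)" if [measurable]: "h \<in> borel_measurable borel" for h :: "real \<Rightarrow> ennreal"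
  using nn_integral_real_affine[of h 1 t] by simp

context
  fixes u :: "real \<Rightarrow> ennreal"
  assumes u[measurable]: "u \<in> borel_measurable borel"
begin

lemma FF_marg: "(\<integral>\<^sup>+b. FF u a b \<partial>lborel) = phi u a * phi u a"
proof -
  define g where "g x = u (x + a) * u x" for x
  have [measurable]: "g \<in> borel_measurable borel" unfolding g_def by measurable
  have "(\<integral>\<^sup>+b. FF u a b \<partial>lborel) = (\<integral>\<^sup>+b. \<integral>\<^sup>+y. g y * g (y + b) \<partial>lborel \<partial>lborel)"
    unfolding FF_def by (intro nn_integral_cong) (simp add: D2_def g_def ac_simps)
  also have "\<dots> = (\<integral>\<^sup>+y. \<integral>\<^sup>+b. g y * g (y + b) \<partial>lborel \<partial>lborel)"
    by (rule lborel_pair.Fubini') measurable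
  also have "\<dots> = (\<integral>\<^sup>+y. g y * phi u a \<partial>lborel)"
  proof (rule nn_integral_cong)
    fix y
    have "(\<integral>\<^sup>+b. g y * g (y + b) \<partial>lborel) = g y * (\<integral>\<^sup>+b. g (y + b) \<partial>lborel)"
      by (rule nn_integral_cmult) measurable
    also have "\<dots> = g y * (\<integral>\<^sup>+b. g b \<partial>lborel)" using tr0[of g y] by simp
    also have "(\<integral>\<^sup>+b. g b \<partial>lborel) = phi u a" by (simp add: g_def phi_def)
    finally show "(\<integral>\<^sup>+b. g y * g (y + b) \<partial>lborel) = g y * phi u a" .
  qed
  also have "\<dots> = (\<integral>\<^sup>+y. g y \<partial>lborel) * phi u a"
    by (rule nn_integral_multc) measurable
  also have "\<dots> = phi u a * phi u a" by (simp add: g_def phi_def)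
  finally show ?thesis .
qed

lemma FF_pos: assumes "phi u (a + b) = 0" shows "FF u a b = 0"
proof -
  have "AE y in lborel. u (y + (a + b)) * u y = 0"
    using assms unfolding phi_def by (subst (asm) nn_integral_0_iff_AE) auto
  then have "AE y in lborel. D2 u a b y = 0"
    by eventually_elim (auto simp: D2_def ac_simps)
  then show ?thesis unfolding FF_def by (subst nn_integral_0_iff_AE) auto
qed

lemma strict_u:
  assumes f2: "(\<integral>\<^sup>+a. phi u a * phi u a \<partial>lborel) \<noteq> top"
    and f3: "(\<integral>\<^sup>+a. \<integral>\<^sup>+b. FF u a b * FF u a b \<partial>lborel \<partial>lborel) \<noteq> top"
    and p3: "(\<integral>\<^sup>+a. \<integral>\<^sup>+b. FF u a b * FF u a b \<partial>lborel \<partial>lborel) \<noteq> 0"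
    and m0: "MM u \<noteq> 0" and mt: "MM u \<noteq> top"
  shows "(\<integral>\<^sup>+a. phi u a * phi u a \<partial>lborel)^4 < (MM u * MM u)^4 * (\<integral>\<^sup>+a. \<integral>\<^sup>+b. FF u a b * FF u a b \<partial>lborel \<partial>lborel)"
proof (rule ccontr)
  define G2 where "G2 = (\<integral>\<^sup>+a. phi u a * phi u a \<partial>lborel)"
  define G3 where "G3 = (\<integral>\<^sup>+a. \<integral>\<^sup>+b. FF u a b * FF u a b \<partial>lborel \<partial>lborel)"
  define L where "L = (\<integral>\<^sup>+a. \<integral>\<^sup>+b. FF u a b * (phi u a * phi u b) \<partial>lborel \<partial>lborel)"
  assume "\<not> ?thesis"
  then have eq: "G2^4 = (MM u * MM u)^4 * G3"
    using nonstrict[OF u f2] unfolding G2_def G3_def by (simp add: not_less)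
  have G2nz: "G2 \<noteq> 0"
  proof
    assume "G2 = 0"
    then have "AE a in lborel. phi u a * phi u a = 0"
      unfolding G2_def by (subst (asm) nn_integral_0_iff_AE) auto
    then have "AE a in lborel. phi u a = 0" by eventually_elim simp
    then have "(\<integral>\<^sup>+a. phi u a \<partial>lborel) = 0" by (subst nn_integral_0_iff_AE) auto
    then show False using int_phi[OF u] m0 by simp
  qed
  have ch1: "G2^8 \<le> MM u^8 * G2^2 * L^2" using chain(1)[OF u] unfolding G2_def L_def .
  have ch2: "MM u^8 * G2^2 * L^2 \<le> MM u^8 * G2^4 * G3" using chain(2)[OF u] unfolding G2_def L_def G3_def .
  have "MM u^8 * G2^4 * G3 = G2^4 * ((MM u * MM u)^4 * G3)" by (simp add: eval_nat_numeral ac_simps)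
  also have "\<dots> = G2^4 * G2^4" by (simp only: eq)
  also have "\<dots> = G2^8" by (simp flip: power_add)
  finally have "MM u^8 * G2^2 * L^2 = MM u^8 * G2^4 * G3" using ch1 ch2 by (auto intro: antisym)
  then have "(MM u^8 * G2^2) * L^2 = (MM u^8 * G2^2) * (G2 * G2 * G3)"
    by (simp add: eval_nat_numeral ac_simps)
  moreover have "MM u^8 * G2^2 \<noteq> 0" "MM u^8 * G2^2 \<noteq> top"
    using m0 mt G2nz f2 by (auto simp: G2_def ennreal_mult_eq_top_iff power_eq_top_ennreal)
  ultimately have LL: "L^2 = G2 * G2 * G3" by (simp add: ennreal_mult_cancel_left)
  have e1: "(\<integral>\<^sup>+p. FF u (fst p) (snd p) * (phi u (fst p) * phi u (snd p)) \<partial>(lborel \<Otimes>\<^sub>M lborel)) = L"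
    unfolding L_def by (subst lborel.nn_integral_fst[symmetric], measurable, (simp)?)
  have e2: "(\<integral>\<^sup>+p. FF u (fst p) (snd p) ^ 2 \<partial>(lborel \<Otimes>\<^sub>M lborel)) = G3"
    unfolding G3_def by (subst lborel.nn_integral_fst[symmetric], measurable) (simp add: power2_eq_square)
  have "(\<integral>\<^sup>+p. (phi u (fst p) * phi u (snd p)) ^ 2 \<partial>(lborel \<Otimes>\<^sub>M lborel))
      = (\<integral>\<^sup>+a. \<integral>\<^sup>+b. (phi u a * phi u a) * (phi u b * phi u b) \<partial>lborel \<partial>lborel)"
    by (subst lborel.nn_integral_fst[symmetric], measurable) (simp add: power2_eq_square ac_simps)
  also have "\<dots> = (\<integral>\<^sup>+a. (phi u a * phi u a) * G2 \<partial>lborel)"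
    unfolding G2_def by (intro nn_integral_cong nn_integral_cmult) measurable
  also have "\<dots> = G2 * G2" unfolding G2_def by (rule nn_integral_multc) measurable
  finally have e3: "(\<integral>\<^sup>+p. (phi u (fst p) * phi u (snd p)) ^ 2 \<partial>(lborel \<Otimes>\<^sub>M lborel)) = G2 * G2" .
  obtain a3 where a3: "G3 = ennreal a3" "a3 > 0" using f3 p3 unfolding G3_def[symmetric]
    by (cases G3) (auto simp: ennreal_zero_less_top)
  have G22: "G2 * G2 \<noteq> 0" "G2 * G2 \<noteq> top" using G2nz f2 by (auto simp: G2_def ennreal_mult_eq_top_iff)
  obtain b2 where b2: "G2 * G2 = ennreal b2" "b2 > 0" using G22
    by (cases "G2 * G2") (auto simp: less_le)
  define c where "c = ennreal (sqrt a3 / sqrt b2)"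
  have c: "c \<noteq> 0" "c \<noteq> top" using a3 b2 by (auto simp: c_def)
  have AEc: "AE p in lborel \<Otimes>\<^sub>M lborel. FF u (fst p) (snd p) = c * (phi u (fst p) * phi u (snd p))"
  proof -
    have h1: "(\<integral>\<^sup>+p. FF u (fst p) (snd p) ^ 2 \<partial>(lborel \<Otimes>\<^sub>M lborel)) = ennreal a3" using e2 a3 by simp
    have h2: "(\<integral>\<^sup>+p. (phi u (fst p) * phi u (snd p)) ^ 2 \<partial>(lborel \<Otimes>\<^sub>M lborel)) = ennreal b2" using e3 b2 by simp
    have h3: "(\<integral>\<^sup>+p. FF u (fst p) (snd p) * (phi u (fst p) * phi u (snd p)) \<partial>(lborel \<Otimes>\<^sub>M lborel))^2
       = (\<integral>\<^sup>+p. FF u (fst p) (snd p) ^ 2 \<partial>(lborel \<Otimes>\<^sub>M lborel)) * (\<integral>\<^sup>+p. (phi u (fst p) * phi u (snd p)) ^ 2 \<partial>(lborel \<Otimes>\<^sub>M lborel))"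
      unfolding e1 e2 e3 LL by (simp add: ac_simps)
    show ?thesis unfolding c_def by (rule nn_CS_eq[OF _ _ h1 a3(2) h2 b2(2) h3]) measurable
  qed
  define \<kappa> where "\<kappa> = c * (MM u * MM u)"
  have \<kappa>: "\<kappa> \<noteq> 0" "\<kappa> \<noteq> top" using c m0 mt by (auto simp: \<kappa>_def ennreal_mult_eq_top_iff)
  define S where "S = {a. phi u a \<noteq> 0}"
  have S[measurable]: "S \<in> sets borel" unfolding S_def by measurable
  have AEpair: "AE a in lborel. AE b in lborel. FF u a b = c * (phi u a * phi u b)"
    using lborel_pair.AE_pair[OF AEc] by simp
  have AEfin: "AE a in lborel. phi u a \<noteq> top"
    using nn_integral_PInf_AE[of "phi u" lborel] int_phi[OF u] m0 mt
    by (simp add: ennreal_mult_eq_top_iff)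
  have AEphi: "AE a in lborel. phi u a = \<kappa> * indicator S a"
    using AEpair AEfin
  proof eventually_elim
    case (elim a)
    have "phi u a * phi u a = (\<integral>\<^sup>+b. FF u a b \<partial>lborel)" by (simp add: FF_marg)
    also have "\<dots> = (\<integral>\<^sup>+b. (c * phi u a) * phi u b \<partial>lborel)"
      using elim(1) by (intro nn_integral_cong_AE) (auto elim!: AE_mp simp: ac_simps)
    also have "\<dots> = (c * phi u a) * (MM u * MM u)"
      by (subst nn_integral_cmult) (simp_all add: int_phi[OF u])
    finally have *: "phi u a * phi u a = phi u a * \<kappa>" by (simp add: \<kappa>_def ac_simps)
    show ?case
    proof (cases "phi u a = 0")
      case True then show ?thesis by (simp add: S_def)
    next
      case False
      then have "phi u a = \<kappa>" using * elim(2) by (simp add: ennreal_mult_cancel_left)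
      then show ?thesis using False by (simp add: S_def)
    qed
  qed
  have "MM u * MM u = (\<integral>\<^sup>+a. phi u a \<partial>lborel)" by (simp add: int_phi[OF u])
  also have "\<dots> = (\<integral>\<^sup>+a. \<kappa> * indicator S a \<partial>lborel)" by (rule nn_integral_cong_AE[OF AEphi])
  also have "\<dots> = \<kappa> * emeasure lborel S" by (simp add: nn_integral_cmult)
  finally have MS: "MM u * MM u = \<kappa> * emeasure lborel S" .
  have Sfin: "emeasure lborel S < \<infinity>"
  proof (rule ccontr)
    assume "\<not> emeasure lborel S < \<infinity>"
    then have "emeasure lborel S = top" by (simp add: less_top[symmetric])
    then have "MM u * MM u = top" using MS \<kappa> by simp
    then show False using mt by (simp add: ennreal_mult_eq_top_iff)
  qed
  have Snz: "emeasure lborel S \<noteq> 0" using MS m0 by auto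
  have A1: "AE p in lborel \<Otimes>\<^sub>M lborel. phi u (fst p) = \<kappa> * indicator S (fst p)"
  proof (rule lborel_pair.AE_pair_measure)
    show "{x \<in> space (lborel \<Otimes>\<^sub>M lborel). phi u (fst x) = \<kappa> * indicator S (fst x)} \<in> sets (lborel \<Otimes>\<^sub>M lborel)"
      by measurable
    show "AE x in lborel. AE y in lborel. phi u (fst (x, y)) = \<kappa> * indicator S (fst (x, y))"
      using AEphi by eventually_elim simp
  qed
  have A2: "AE p in lborel \<Otimes>\<^sub>M lborel. phi u (snd p) = \<kappa> * indicator S (snd p)"
  proof (rule lborel_pair.AE_pair_measure)
    show "{x \<in> space (lborel \<Otimes>\<^sub>M lborel). phi u (snd x) = \<kappa> * indicator S (snd x)} \<in> sets (lborel \<Otimes>\<^sub>M lborel)"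
      by measurable
    show "AE x in lborel. AE y in lborel. phi u (snd (x, y)) = \<kappa> * indicator S (snd (x, y))"
    proof (rule always_eventually, rule allI)
      fix x show "AE y in lborel. phi u (snd (x, y)) = \<kappa> * indicator S (snd (x, y))" using AEphi by simp
    qed
  qed
  have "AE p in lborel \<Otimes>\<^sub>M lborel. fst p \<in> S \<longrightarrow> snd p \<in> S \<longrightarrow> fst p + snd p \<in> S"
    using AEc A1 A2
  proof eventually_elim
    case (elim p)
    show ?case
    proof (intro impI)
      assume "fst p \<in> S" "snd p \<in> S"
      then have "FF u (fst p) (snd p) = c * (\<kappa> * \<kappa>)" using elim by simp
      then have "FF u (fst p) (snd p) \<noteq> 0" using c \<kappa> by simp
      then have "phi u (fst p + snd p) \<noteq> 0" using FF_pos by blast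
      then show "fst p + snd p \<in> S" by (simp add: S_def)
    qed
  qed
  then have "emeasure lborel S = 0" by (rule core[OF S Sfin])
  then show False using Snz by simp
qed

end

lemma SUP_prod:
  fixes f g :: "nat \<Rightarrow> ennreal"
  assumes f: "incseq f" and g: "incseq g"
  shows "(SUP n. f n * g n) = (SUP n. f n) * (SUP n. g n)"
proof (rule antisym)
  show "(SUP n. f n * g n) \<le> (SUP n. f n) * (SUP n. g n)"
    by (intro SUP_least mult_mono SUP_upper) auto
  have "(SUP n. f n) * (SUP n. g n) = (SUP i. SUP j. f i * g j)"
    by (simp add: SUP_mult_left_ennreal SUP_mult_right_ennreal) (rule SUP_commute)
  also have "\<dots> \<le> (SUP n. f n * g n)"
  proof (intro SUP_least)
    fix i j
    have "f i * g j \<le> f (max i j) * g (max i j)"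
      using f g by (intro mult_mono) (auto simp: incseq_def)
    also have "\<dots> \<le> (SUP n. f n * g n)" by (rule SUP_upper) simp
    finally show "f i * g j \<le> (SUP n. f n * g n)" .
  qed
  finally show "(SUP n. f n) * (SUP n. g n) \<le> (SUP n. f n * g n)" .
qed

definition un :: "(real \<Rightarrow> ennreal) \<Rightarrow> nat \<Rightarrow> real \<Rightarrow> ennreal" where
  "un u n y = min (u y) (of_nat n) * indicator {- real n .. real n} y"

lemma un_meas[measurable]:
  assumes [measurable]: "u \<in> borel_measurable borel"
  shows "un u n \<in> borel_measurable borel"
proof -
  have [measurable]: "{- real n..real n} \<in> sets borel" by simp
  show ?thesis unfolding un_def[abs_def] by measurable
qed

lemma un_le: "un u n y \<le> u y"
  unfolding un_def by (auto split: split_indicator)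

lemma un_inc: "n \<le> m \<Longrightarrow> un u n y \<le> un u m y"
  unfolding un_def by (intro mult_mono min.mono) (auto split: split_indicator)

lemma un_SUP: "(SUP n. un u n y) = u y"
proof -
  have i1: "incseq (\<lambda>n. min (u y) (of_nat n))"
    unfolding incseq_def by (intro allI impI min.mono order.refl) (simp add: of_nat_mono)
  have i2: "incseq (\<lambda>n. indicator {- real n .. real n} y :: ennreal)"
    by (auto simp: incseq_def split: split_indicator)
  have s1: "(SUP n. min (u y) (of_nat n)) = u y"
  proof (rule antisym)
    show "(SUP n. min (u y) (of_nat n)) \<le> u y" by (auto intro: SUP_least)
    show "u y \<le> (SUP n. min (u y) (of_nat n))"
    proof (cases "u y = top")
      case True
      then have "(\<lambda>n. min (u y) (of_nat n)) = (\<lambda>n. of_nat n :: ennreal)" by auto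
      then have "(SUP n. min (u y) (of_nat n)) = (SUP n. of_nat n :: ennreal)" by (simp only:)
      also have "\<dots> = top" by (rule ennreal_SUP_of_nat_eq_top)
      finally have "(SUP n. min (u y) (of_nat n)) = top" .
      then show ?thesis by (metis top_greatest)
    next
      case False
      then obtain n where "u y < of_nat n" using ennreal_Ex_less_of_nat less_top by blast
      then have "u y = min (u y) (of_nat n)" by simp
      also have "\<dots> \<le> (SUP n. min (u y) (of_nat n))" by (rule SUP_upper) simp
      finally show ?thesis .
    qed
  qed
  have s2: "(SUP n. indicator {- real n .. real n} y :: ennreal) = 1"
  proof (rule antisym)
    show "(SUP n. indicator {- real n .. real n} y :: ennreal) \<le> 1"
      by (intro SUP_least) (auto split: split_indicator)
    obtain n where "\<bar>y\<bar> \<le> real n" using real_arch_simple by blast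
    then have "1 = (indicator {- real n .. real n} y :: ennreal)" by (auto split: split_indicator)
    also have "\<dots> \<le> (SUP n. indicator {- real n .. real n} y :: ennreal)" by (rule SUP_upper) simp
    finally show "1 \<le> (SUP n. indicator {- real n .. real n} y :: ennreal)" .
  qed
  show ?thesis unfolding un_def SUP_prod[OF i1 i2] s1 s2 by simp
qed

lemma phi_mono: "(\<And>y. v y \<le> w y) \<Longrightarrow> phi v a \<le> phi w a"
  unfolding phi_def by (intro nn_integral_mono mult_mono) auto

lemma FF_mono: "(\<And>y. v y \<le> w y) \<Longrightarrow> FF v a b \<le> FF w a b"
  unfolding FF_def D2_def by (intro nn_integral_mono mult_mono) auto

lemma MM_mono: "(\<And>y. v y \<le> w y) \<Longrightarrow> MM v \<le> MM w"
  unfolding MM_def by (intro nn_integral_mono) auto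

lemma phi_SUP:
  assumes [measurable]: "u \<in> borel_measurable borel"
  shows "(SUP n. phi (un u n) a) = phi u a"
proof -
  have "(SUP n. phi (un u n) a) = (\<integral>\<^sup>+y. (SUP n. un u n (y + a) * un u n y) \<partial>lborel)"
    unfolding phi_def
    by (rule nn_integral_monotone_convergence_SUP[symmetric])
       (auto simp: incseq_def le_fun_def intro!: mult_mono un_inc)
  also have "\<dots> = phi u a"
    unfolding phi_def
    by (subst SUP_prod) (auto simp: incseq_def un_inc un_SUP)
  finally show ?thesis .
qed

lemma G2_SUP:
  assumes [measurable]: "u \<in> borel_measurable borel"
  shows "(SUP n. (\<integral>\<^sup>+a. phi (un u n) a * phi (un u n) a \<partial>lborel)) = (\<integral>\<^sup>+a. phi u a * phi u a \<partial>lborel)"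
proof -
  have inc: "incseq (\<lambda>n. phi (un u n) a)" for a
    by (auto simp: incseq_def intro!: phi_mono un_inc)
  have "(SUP n. (\<integral>\<^sup>+a. phi (un u n) a * phi (un u n) a \<partial>lborel)) = (\<integral>\<^sup>+a. (SUP n. phi (un u n) a * phi (un u n) a) \<partial>lborel)"
    by (rule nn_integral_monotone_convergence_SUP[symmetric])
       (auto simp: incseq_def le_fun_def intro!: mult_mono phi_mono un_inc)
  also have "\<dots> = (\<integral>\<^sup>+a. phi u a * phi u a \<partial>lborel)"
    by (simp add: SUP_prod[OF inc inc] phi_SUP)
  finally show ?thesis .
qed

lemma G2_un_fin:
  assumes [measurable]: "u \<in> borel_measurable borel"
  shows "(\<integral>\<^sup>+a. phi (un u n) a * phi (un u n) a \<partial>lborel) \<noteq> top"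
proof -
  define N where "N = real n"
  have N: "N \<ge> 0" by (simp add: N_def)
  define C where "C = (of_nat n :: ennreal) * of_nat n * ennreal (2 * N)"
  have bnd: "un u n z \<le> of_nat n * indicator {-N..N} z" for z
    unfolding un_def N_def by (auto split: split_indicator)
  have pw: "un u n (y + a) * un u n y \<le> (of_nat n * of_nat n * indicator {-2*N..2*N} a) * indicator {-N..N} y" for y a
  proof -
    have "un u n (y + a) * un u n y \<le> (of_nat n * indicator {-N..N} (y + a)) * (of_nat n * indicator {-N..N} y)"
      by (intro mult_mono bnd) auto
    also have "\<dots> \<le> (of_nat n * of_nat n * indicator {-2*N..2*N} a) * indicator {-N..N} y"
      by (auto split: split_indicator simp: ac_simps)
    finally show ?thesis .
  qed
  have phib: "phi (un u n) a \<le> C * indicator {-2*N..2*N} a" for a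
  proof -
    have "phi (un u n) a \<le> (\<integral>\<^sup>+y. (of_nat n * of_nat n * indicator {-2*N..2*N} a) * indicator {-N..N} y \<partial>lborel)"
      unfolding phi_def by (intro nn_integral_mono pw)
    also have "\<dots> = (of_nat n * of_nat n * indicator {-2*N..2*N} a) * emeasure lborel {-N..N}"
      by (subst nn_integral_cmult) auto
    also have "\<dots> = C * indicator {-2*N..2*N} a"
      using N by (simp add: C_def ac_simps)
    finally show ?thesis .
  qed
  have "(\<integral>\<^sup>+a. phi (un u n) a * phi (un u n) a \<partial>lborel) \<le> (\<integral>\<^sup>+a. (C * C) * indicator {-2*N..2*N} a \<partial>lborel)"
    by (intro nn_integral_mono order_trans[OF mult_mono[OF phib phib]]) (auto split: split_indicator)
  also have "\<dots> = (C * C) * emeasure lborel {-2*N..2*N}"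
    by (subst nn_integral_cmult) auto
  also have "\<dots> < top"
    using N by (simp add: C_def ennreal_mult_less_top of_nat_less_top)
  finally show ?thesis by simp
qed

lemma G2_fin:
  assumes [measurable]: "u \<in> borel_measurable borel"
    and m: "MM u \<noteq> top" and g3: "(\<integral>\<^sup>+a. \<integral>\<^sup>+b. FF u a b * FF u a b \<partial>lborel \<partial>lborel) \<noteq> top"
  shows "(\<integral>\<^sup>+a. phi u a * phi u a \<partial>lborel) \<noteq> top"
proof
  define B where "B = (MM u * MM u)^4 * (\<integral>\<^sup>+a. \<integral>\<^sup>+b. FF u a b * FF u a b \<partial>lborel \<partial>lborel)"
  have Bt: "B \<noteq> top" using m g3 by (simp add: B_def ennreal_mult_eq_top_iff power_eq_top_ennreal)
  have each: "(\<integral>\<^sup>+a. phi (un u n) a * phi (un u n) a \<partial>lborel)^4 \<le> B" for n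
  proof -
    have "(\<integral>\<^sup>+a. phi (un u n) a * phi (un u n) a \<partial>lborel)^4
       \<le> (MM (un u n) * MM (un u n))^4 * (\<integral>\<^sup>+a. \<integral>\<^sup>+b. FF (un u n) a b * FF (un u n) a b \<partial>lborel \<partial>lborel)"
      by (rule nonstrict) (simp_all add: G2_un_fin)
    also have "\<dots> \<le> B" unfolding B_def
      by (intro mult_mono power_mono nn_integral_mono MM_mono FF_mono un_le) auto
    finally show ?thesis .
  qed
  assume "(\<integral>\<^sup>+a. phi u a * phi u a \<partial>lborel) = top"
  then have sup: "(SUP n. (\<integral>\<^sup>+a. phi (un u n) a * phi (un u n) a \<partial>lborel)) = top" by (simp add: G2_SUP)
  obtain b where b: "B = ennreal b" "b \<ge> 0" using Bt by (cases B) auto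
  define k where "k = b + 1"
  have "ennreal k < (SUP n. (\<integral>\<^sup>+a. phi (un u n) a * phi (un u n) a \<partial>lborel))" unfolding sup by simp
  then obtain n where n: "ennreal k < (\<integral>\<^sup>+a. phi (un u n) a * phi (un u n) a \<partial>lborel)"
    by (auto simp: less_SUP_iff)
  have "ennreal b < ennreal k" using b by (simp add: k_def ennreal_less_iff)
  also have "ennreal k \<le> ennreal k ^ 4"
  proof -
    have k1: "1 \<le> k" using b by (simp add: k_def)
    have "k ^ 1 \<le> k ^ 4" by (rule power_increasing[OF _ k1]) simp
    then have "k \<le> k ^ 4" by simp
    then have "ennreal k \<le> ennreal (k ^ 4)" by (rule ennreal_leI)
    then show ?thesis using k1 by (simp add: ennreal_power)
  qed
  also have "\<dots> \<le> (\<integral>\<^sup>+a. phi (un u n) a * phi (un u n) a \<partial>lborel)^4"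
    by (rule power_mono[OF less_imp_le[OF n]]) auto
  also have "\<dots> \<le> B" by (rule each)
  finally show False using b by simp
qed

lemma AE_shift:
  fixes P :: "real \<Rightarrow> bool"
  assumes "AE x in lborel. P x"
  shows "AE x in lborel. P (t + x)"
proof -
  obtain N where N0: "{x \<in> space lborel. \<not> P x} \<subseteq> N" "emeasure lborel N = 0" "N \<in> sets lborel"
    using assms by (rule AE_E)
  have N: "N \<in> null_sets lborel" "{x \<in> space lborel. \<not> P x} \<subseteq> N" using N0 by auto
  have Nb: "N \<in> sets borel" using N0 by auto
  have nN: "AE x in lborel. x \<notin> N" using N(1) by (rule AE_not_in)
  have pN: "Measurable.pred borel (\<lambda>a. a \<notin> N)" using Nb by measurable
  have "AE x in lborel. t + 1 * x \<notin> N"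
    using AE_borel_affine[where c=1 and P="\<lambda>a. a \<notin> N" and t=t, OF _ pN nN] by simp
  then show ?thesis by eventually_elim (use N(2) in auto)
qed

lemma gd_nonneg: "(\<And>x. f x \<ge> 0) \<Longrightarrow> gowers_diff f hs x \<ge> 0"
  by (induction hs arbitrary: x) auto

lemma rep:
  fixes f h :: "real \<Rightarrow> real"
  assumes ae: "AE x in lborel. f x = h x" and hnn: "\<And>x. h x \<ge> 0"
  shows "gowers_int f 1 = (\<integral>\<^sup>+x. \<integral>\<^sup>+a. ennreal (h (x + a)) * ennreal (h x) \<partial>lborel \<partial>lborel)"
    and "gowers_int f 2 = (\<integral>\<^sup>+x. \<integral>\<^sup>+a. \<integral>\<^sup>+b. ennreal (h (x + a + b)) * ennreal (h (x + a)) * (ennreal (h (x + b)) * ennreal (h x)) \<partial>lborel \<partial>lborel \<partial>lborel)"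
    and "gowers_int f 3 = (\<integral>\<^sup>+x. \<integral>\<^sup>+a. \<integral>\<^sup>+b. \<integral>\<^sup>+c. ennreal (h (x + a + b + c)) * ennreal (h (x + a + b)) * (ennreal (h (x + a + c)) * ennreal (h (x + a))) *
          (ennreal (h (x + b + c)) * ennreal (h (x + b)) * (ennreal (h (x + c)) * ennreal (h x))) \<partial>lborel \<partial>lborel \<partial>lborel \<partial>lborel)"
proof -
  have sh: "AE y in lborel. f (t + y) = h (t + y)" for t using AE_shift[OF ae] .
  have sh0: "AE y in lborel. f y = h y" using ae .
  show "gowers_int f 1 = (\<integral>\<^sup>+x. \<integral>\<^sup>+a. ennreal (h (x + a)) * ennreal (h x) \<partial>lborel \<partial>lborel)"
    unfolding gowers_int_def
    apply (simp add: nn_integral_completion)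
    apply (rule nn_integral_cong_AE)
    using sh0 apply eventually_elim
    subgoal for x
      apply (rule nn_integral_cong_AE)
      using sh[of x] apply eventually_elim
      apply (simp add: ennreal_mult hnn)
      done
    done
  show "gowers_int f 2 = (\<integral>\<^sup>+x. \<integral>\<^sup>+a. \<integral>\<^sup>+b. ennreal (h (x + a + b)) * ennreal (h (x + a)) * (ennreal (h (x + b)) * ennreal (h x)) \<partial>lborel \<partial>lborel \<partial>lborel)"
    unfolding gowers_int_def
    apply (simp add: nn_integral_completion numeral_eq_Suc)
    apply (rule nn_integral_cong_AE)
    using sh0 apply eventually_elim
    subgoal for x
      apply (rule nn_integral_cong_AE)
      using sh[of x] apply eventually_elim
      subgoal for a
        apply (rule nn_integral_cong_AE)
        using sh[of x] sh[of "x + a"] apply eventually_elim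
        apply (simp add: ennreal_mult hnn)
        done
      done
    done
  show "gowers_int f 3 = (\<integral>\<^sup>+x. \<integral>\<^sup>+a. \<integral>\<^sup>+b. \<integral>\<^sup>+c. ennreal (h (x + a + b + c)) * ennreal (h (x + a + b)) * (ennreal (h (x + a + c)) * ennreal (h (x + a))) *
          (ennreal (h (x + b + c)) * ennreal (h (x + b)) * (ennreal (h (x + c)) * ennreal (h x))) \<partial>lborel \<partial>lborel \<partial>lborel \<partial>lborel)"
    unfolding gowers_int_def
    apply (simp add: nn_integral_completion numeral_eq_Suc)
    apply (rule nn_integral_cong_AE)
    using sh0 apply eventually_elim
    subgoal for x
      apply (rule nn_integral_cong_AE)
      using sh[of x] apply eventually_elim
      subgoal for a
        apply (rule nn_integral_cong_AE)
        using sh[of x] sh[of "x + a"] apply eventually_elim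
        subgoal for b
          apply (rule nn_integral_cong_AE)
          using sh[of x] sh[of "x + a"] sh[of "x + b"] sh[of "x + a + b"] apply eventually_elim
          apply (simp add: ennreal_mult hnn)
          done
        done
      done
    done
qed

lemma final_real:
  fixes g1 g2 g3 :: real
  assumes g1: "g1 > 0" and g3: "g3 > 0" and g2: "g2 \<ge> 0" and lt: "g2^4 < g1^4 * g3"
  shows "g2 powr (1 / 2 ^ 2) < (g1 powr (1 / 2 ^ 1)) powr (1/2) * (g3 powr (1 / 2 ^ 3)) powr (1/2)"
proof -
  have "(g2^4) powr (1/16) < (g1^4 * g3) powr (1/16)"
    by (rule powr_less_mono2) (use lt g2 in auto)
  moreover have "(g2^4) powr (1/16) = g2 powr (1/4)"
  proof (cases "g2 = 0")
    case True then show ?thesis by simp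
  next
    case False
    then have "g2 > 0" using g2 by simp
    then have "(g2^4) powr (1/16) = (g2 powr 4) powr (1/16)" by (simp add: powr_realpow)
    also have "\<dots> = g2 powr (1/4)" by (simp add: powr_powr)
    finally show ?thesis .
  qed
  moreover have "(g1^4 * g3) powr (1/16) = g1 powr (1/4) * g3 powr (1/16)"
  proof -
    have "(g1^4 * g3) powr (1/16) = (g1^4) powr (1/16) * g3 powr (1/16)"
      using g1 g3 by (simp add: powr_mult)
    also have "(g1^4) powr (1/16) = (g1 powr 4) powr (1/16)" using g1 by (simp add: powr_realpow)
    also have "\<dots> = g1 powr (1/4)" by (simp add: powr_powr)
    finally show ?thesis .
  qed
  moreover have "(g1 powr (1 / 2 ^ 1)) powr (1/2) = g1 powr (1/4)" by (simp add: powr_powr)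
  moreover have "(g3 powr (1 / 2 ^ 3)) powr (1/2) = g3 powr (1/16)" by (simp add: powr_powr)
  ultimately show ?thesis by simp
qed

theorem proposition2p5:
  fixes f :: "real \<Rightarrow> real"
  assumes "f \<in> borel_measurable lebesgue"
    and "\<And>x. f x \<ge> 0"
    and "0 < gowers_int f 1" and "gowers_int f 1 < \<infinity>"
    and "0 < gowers_int f 3" and "gowers_int f 3 < \<infinity>"
  shows "gowers_int f 2 < \<infinity> \<and>
         gowers_norm f 2 < gowers_norm f 1 powr (1/2) * gowers_norm f 3 powr (1/2)"
proof -
  obtain g where g: "g \<in> borel_measurable lborel" "AE x in lborel. f x = g x"
    using completion_ex_borel_measurable_real[OF assms(1)] by auto
  define h where "h x = max 0 (g x)" for x
  have hb[measurable]: "h \<in> borel_measurable borel" using g(1) unfolding h_def[abs_def] by measurable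
  have hnn: "h x \<ge> 0" for x by (simp add: h_def)
  have aeh: "AE x in lborel. f x = h x" using g(2)
  proof eventually_elim
    case (elim x) then show ?case using assms(2)[of x] by (simp add: h_def)
  qed
  define u where "u x = ennreal (h x)" for x
  have u[measurable]: "u \<in> borel_measurable borel" unfolding u_def[abs_def] by measurable
  have R1: "gowers_int f 1 = MM u * MM u"
    using rep(1)[OF aeh hnn] G1_form[OF u] by (simp add: u_def)
  have R2: "gowers_int f 2 = (\<integral>\<^sup>+a. phi u a * phi u a \<partial>lborel)"
    using rep(2)[OF aeh hnn] G2_form1[OF u] G2_form2[OF u] by (simp add: u_def)
  have R3: "gowers_int f 3 = (\<integral>\<^sup>+a. \<integral>\<^sup>+b. FF u a b * FF u a b \<partial>lborel \<partial>lborel)"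
    using rep(3)[OF aeh hnn] G3_form1[OF u] G3_form2[OF u] by (simp add: u_def)
  have m0: "MM u \<noteq> 0" using assms(3) R1 by auto
  have mt: "MM u \<noteq> top" using assms(4) R1 by (auto simp: ennreal_mult_eq_top_iff)
  have f3: "(\<integral>\<^sup>+a. \<integral>\<^sup>+b. FF u a b * FF u a b \<partial>lborel \<partial>lborel) \<noteq> top" using assms(6) R3 by simp
  have p3: "(\<integral>\<^sup>+a. \<integral>\<^sup>+b. FF u a b * FF u a b \<partial>lborel \<partial>lborel) \<noteq> 0" using assms(5) R3 by simp
  have f2: "(\<integral>\<^sup>+a. phi u a * phi u a \<partial>lborel) \<noteq> top" by (rule G2_fin[OF u mt f3])
  have st: "gowers_int f 2 ^ 4 < gowers_int f 1 ^ 4 * gowers_int f 3"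
    using strict_u[OF u f2 f3 p3 m0 mt] unfolding R1 R2 R3 .
  have fin2: "gowers_int f 2 < \<infinity>" using f2 R2 by (simp add: less_top)
  obtain g1 where g1: "gowers_int f 1 = ennreal g1" "g1 > 0"
    using assms(3,4) by (cases "gowers_int f 1") (auto simp: less_le)
  obtain g3 where g3: "gowers_int f 3 = ennreal g3" "g3 > 0"
    using assms(5,6) by (cases "gowers_int f 3") (auto simp: less_le)
  obtain g2 where g2: "gowers_int f 2 = ennreal g2" "g2 \<ge> 0"
    using fin2 by (cases "gowers_int f 2") auto
  have "ennreal (g2^4) < ennreal (g1^4 * g3)"
    using st g1 g2 g3 by (simp add: ennreal_power ennreal_mult)
  then have lt: "g2^4 < g1^4 * g3" by (subst (asm) ennreal_less_iff) (use g1 g3 in auto)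
  have "gowers_norm f 2 < gowers_norm f 1 powr (1/2) * gowers_norm f 3 powr (1/2)"
    unfolding gowers_norm_def using g1 g2 g3 final_real[OF g1(2) g3(2) g2(2) lt] by simp
  with fin2 show ?thesis by simp
qed

end
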